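(* Let $V$ be a finite set of INF sentences over a vocabulary $\Sigma$ and let $\tilde I$ be a four-valued $\Sigma$-structure with domain $D$. Then $\mathrm{tf}(\lim_{O(V)}(\tilde I)) = \mathrm{glb}_{\le_t}\{M \mid M \text{ a two-valued } \mathrm{tf}(\Sigma)\text{-structure with domain } D,\ M\models\Delta_V,\ \mathrm{tf}(\tilde I)\le_t M\}$, where $O(V)=\{O_\varphi\mid\varphi\in V\}$.
   Context: Vocabularies are finite sets of predicate symbols (equality interpreted as identity). Truth values $\mathbf{t},\mathbf{f},\mathbf{u},\mathbf{i}$; inverse swaps $\mathbf{t},\mathbf{f}$ and fixes $\mathbf{u},\mathbf{i}$. Truth order $\le_t$: $\mathbf{f}\le_t\mathbf{u}\le_t\mathbf{t}$, $\mathbf{f}\le_t\mathbf{i}\le_t\mathbf{t}$. Precision order $\le_p$: $\mathbf{u}\le_p\mathbf{t}\le_p\mathbf{i}$, $\mathbf{u}\le_p\mathbf{f}\le_p\mathbf{i}$. A four-valued $\Sigma$-structure $\tilde I$ has domain $D$ and assigns each $P/n\in\Sigma$ a function $P^{\tilde I}:D^n\to\{\mathbf{t},\mathbf{f},\mathbf{u},\mathbf{i}\}$; two-valued structures are identified with ordinary structures. $\le_p$ on structures is pointwise. Formula values $\tilde I\theta(\varphi)$: atoms via $P^{\tilde I}$, $\neg$ by inverse, $\wedge,\forall$ by $\le_t$-glb, $\vee,\exists$ by $\le_t$-lub. For two-valued structures over the same vocabulary and domain, $M\le_t M'$ means $P^M\subseteq P^{M'}$ for every predicate, and $\mathrm{glb}_{\le_t}$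 is pointwise intersection. Encoding: $\mathrm{tf}(\Sigma)=\{P^{ct}/n,P^{cf}/n\mid P/n\in\Sigma\}$; $\mathrm{tf}(\tilde I)$ is the two-valued $\mathrm{tf}(\Sigma)$-structure with domain $D$ and $(P^{ct})^{\mathrm{tf}(\tilde I)}=\{\overline{d}\mid P^{\tilde I}(\overline{d})\ge_p\mathbf{t}\}$, $(P^{cf})^{\mathrm{tf}(\tilde I)}=\{\overline{d}\mid P^{\tilde I}(\overline{d})\ge_p\mathbf{f}\}$. For formulas over $\Sigma$, $\varphi^{ct}$ and $\varphi^{cf}$ are defined by simultaneous induction: $(P(\overline{x}))^{ct}=P^{ct}(\overline{x})$, $(P(\overline{x}))^{cf}=P^{cf}(\overline{x})$; $(\neg\varphi)^{ct}=\varphi^{cf}$, $(\neg\varphi)^{cf}=\varphi^{ct}$; $(\varphi\wedge\psi)^{ct}=\varphi^{ct}\wedge\psi^{ct}$, $(\varphi\wedge\psi)^{cf}=\varphi^{cf}\vee\psi^{cf}$; $(\varphi\vee\psi)^{ct}=\varphi^{ct}\vee\psi^{ct}$, $(\varphi\vee\psi)^{cf}=\varphi^{cf}\wedge\psi^{cf}$; $(\forall x\varphi)^{ct}=\forall x\varphi^{ct}$, $(\forall x\varphi)^{cf}=\exists x\varphi^{cf}$; $(\exists x\varphi)^{ct}=\exists x\varphi^{ct}$, $(\exists x\varphi)^{cf}=\forall x\varphi^{cf}$. INF sentences: $\forall\overline{x}(\psi\supset L[\overline{x}])$ with $\psi$ having free variables among $\overline{x}$ and $L$ one of $P(\overline{x}),\neg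 P(\overline{x})$. INF propagator $O_\varphi$: $O_\varphi(\tilde I)$ agrees with $\tilde I$ except that for each $\overline{d}$ with $\tilde I[\overline{x}/\overline{d}](\psi)\ge_p\mathbf{t}$, $P^{O_\varphi(\tilde I)}(\overline{d})=\mathrm{lub}_{\le_p}\{\mathbf{t},P^{\tilde I}(\overline{d})\}$ (resp. with $\mathbf{f}$ if $L$ is negative). A $W$-refinement sequence from $\tilde I$ (for a set $W$ of operators) is a (possibly transfinite) sequence $\langle\tilde J_\xi\rangle_{\xi\le\alpha}$ with $\tilde J_0=\tilde I$, $\tilde J_{\xi+1}=O(\tilde J_\xi)$ for some $O\in W$, $\tilde J_\xi<_p\tilde J_{\xi+1}$, and $\le_p$-lubs at limits; stabilizing if $O(\tilde J_\alpha)=\tilde J_\alpha$ for all $O\in W$. For $W=O(V)$ all stabilizing sequences from $\tilde I$ have the same last element $\lim_{O(V)}(\tilde I)$. Rule sets: $\Delta_V=\{\forall\overline{x}\,((L[\overline{x}])^{ct}\leftarrow\psi^{ct})\mid\forall\overline{x}(\psi\supset L[\overline{x}])\in V\}$, where $(P(\overline{x}))^{ct}=P^{ct}(\overline{x})$ and $(\neg P(\overline{x}))^{ct}=P^{cf}(\overline{x})$. For a rule set $\Delta$ over $\mathrm{tf}(\Sigma)$, the operator $T_\Delta$ on two-valued $\mathrm{tf}(\Sigma)$-structures is: $\overline{d}\in Q^{T_\Delta(M)}$ iff $\overline{d}\in Q^M$ or there is a rule $\forall\overline{x}(Q(\overline{x})\leftarrow\chi)$ in $\Delta$ with $M[\overline{x}/\overline{d}]\models\chi$.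 $M\models\Delta$ iff $M$ is a fixpoint of $T_\Delta$. *)

theory Defs
  imports Main
begin

datatype tv = Tt | Ff | Uu | Ii

fun inv_tv :: "tv \<Rightarrow> tv" where
  "inv_tv Tt = Ff" | "inv_tv Ff = Tt" | "inv_tv Uu = Uu" | "inv_tv Ii = Ii"

definition leq_t :: "tv \<Rightarrow> tv \<Rightarrow> bool" where
  "leq_t a b \<longleftrightarrow> a = b \<or> a = Ff \<or> b = Tt"

definition leq_p :: "tv \<Rightarrow> tv \<Rightarrow> bool" where
  "leq_p a b \<longleftrightarrow> a = b \<or> a = Uu \<or> b = Ii"

definition glb_t :: "tv set \<Rightarrow> tv" where
  "glb_t S = (if Ff \<in> S \<or> (Uu \<in> S \<and> Ii \<in> S) then Ff
              else if Uu \<in> S then Uu else if Ii \<in> S then Ii else Tt)"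

definition lub_t :: "tv set \<Rightarrow> tv" where
  "lub_t S = (if Tt \<in> S \<or> (Uu \<in> S \<and> Ii \<in> S) then Tt
              else if Uu \<in> S then Uu else if Ii \<in> S then Ii else Ff)"

definition lub_p :: "tv set \<Rightarrow> tv" where
  "lub_p S = (if Ii \<in> S \<or> (Tt \<in> S \<and> Ff \<in> S) then Ii
              else if Tt \<in> S then Tt else if Ff \<in> S then Ff else Uu)"

datatype ('p, 'v) fm =
    Pred 'p "'v list"
  | Eq 'v 'v
  | Neg "('p, 'v) fm"
  | Conj "('p, 'v) fm" "('p, 'v) fm"
  | Disj "('p, 'v) fm" "('p, 'v) fm"
  | All 'v "('p, 'v) fm"
  | Ex 'v "('p, 'v) fm"

fun fv :: "('p, 'v) fm \<Rightarrow> 'v set" where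
  "fv (Pred P xs) = set xs"
| "fv (Eq x y) = {x, y}"
| "fv (Neg f) = fv f"
| "fv (Conj f g) = fv f \<union> fv g"
| "fv (Disj f g) = fv f \<union> fv g"
| "fv (All x f) = fv f - {x}"
| "fv (Ex x f) = fv f - {x}"

fun wf_fm :: "'p set \<Rightarrow> ('p \<Rightarrow> nat) \<Rightarrow> ('p, 'v) fm \<Rightarrow> bool" where
  "wf_fm Sig ar (Pred P xs) \<longleftrightarrow> P \<in> Sig \<and> length xs = ar P"
| "wf_fm Sig ar (Eq x y) \<longleftrightarrow> True"
| "wf_fm Sig ar (Neg f) \<longleftrightarrow> wf_fm Sig ar f"
| "wf_fm Sig ar (Conj f g) \<longleftrightarrow> wf_fm Sig ar f \<and> wf_fm Sig ar g"
| "wf_fm Sig ar (Disj f g) \<longleftrightarrow> wf_fm Sig ar f \<and> wf_fm Sig ar g"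
| "wf_fm Sig ar (All x f) \<longleftrightarrow> wf_fm Sig ar f"
| "wf_fm Sig ar (Ex x f) \<longleftrightarrow> wf_fm Sig ar f"

section \<open>Structures; the domain D is the (arbitrary, nonempty) type 'd\<close>

type_synonym ('p, 'd) struct4 = "'p \<Rightarrow> 'd list \<Rightarrow> tv"

text \<open>A four-valued Sigma-structure: junk tuples (wrong predicate or arity) carry u.\<close>
definition wf4 :: "'p set \<Rightarrow> ('p \<Rightarrow> nat) \<Rightarrow> ('p, 'd) struct4 \<Rightarrow> bool" where
  "wf4 Sig ar I \<longleftrightarrow> (\<forall>P ds. \<not> (P \<in> Sig \<and> length ds = ar P) \<longrightarrow> I P ds = Uu)"

fun upd :: "('v \<Rightarrow> 'd) \<Rightarrow> 'v list \<Rightarrow> 'd list \<Rightarrow> ('v \<Rightarrow> 'd)" where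
  "upd \<theta> (x # xs) (d # ds) = upd (\<theta>(x := d)) xs ds"
| "upd \<theta> _ _ = \<theta>"

fun val4 :: "('p, 'd) struct4 \<Rightarrow> ('v \<Rightarrow> 'd) \<Rightarrow> ('p, 'v) fm \<Rightarrow> tv" where
  "val4 I \<theta> (Pred P xs) = I P (map \<theta> xs)"
| "val4 I \<theta> (Eq x y) = (if \<theta> x = \<theta> y then Tt else Ff)"
| "val4 I \<theta> (Neg f) = inv_tv (val4 I \<theta> f)"
| "val4 I \<theta> (Conj f g) = glb_t {val4 I \<theta> f, val4 I \<theta> g}"
| "val4 I \<theta> (Disj f g) = lub_t {val4 I \<theta> f, val4 I \<theta> g}"
| "val4 I \<theta> (All x f) = glb_t {val4 I (\<theta>(x := d)) f | d. True}"
| "val4 I \<theta> (Ex x f) = lub_t {val4 I (\<theta>(x := d)) f | d. True}"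

definition leq_p_s :: "('p, 'd) struct4 \<Rightarrow> ('p, 'd) struct4 \<Rightarrow> bool" where
  "leq_p_s I J \<longleftrightarrow> (\<forall>P ds. leq_p (I P ds) (J P ds))"

definition less_p_s :: "('p, 'd) struct4 \<Rightarrow> ('p, 'd) struct4 \<Rightarrow> bool" where
  "less_p_s I J \<longleftrightarrow> leq_p_s I J \<and> I \<noteq> J"

definition lub_p_s :: "('p, 'd) struct4 set \<Rightarrow> ('p, 'd) struct4" where
  "lub_p_s S = (\<lambda>P ds. lub_p {J P ds | J. J \<in> S})"

datatype 'p tfsym = Ct 'p | Cf 'p

fun base_sym :: "'p tfsym \<Rightarrow> 'p" where
  "base_sym (Ct P) = P" | "base_sym (Cf P) = P"

type_synonym ('p, 'd) struct2 = "'p tfsym \<Rightarrow> 'd list \<Rightarrow> bool"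

definition wf2 :: "'p set \<Rightarrow> ('p \<Rightarrow> nat) \<Rightarrow> ('p, 'd) struct2 \<Rightarrow> bool" where
  "wf2 Sig ar M \<longleftrightarrow> (\<forall>Q ds. M Q ds \<longrightarrow> base_sym Q \<in> Sig \<and> length ds = ar (base_sym Q))"

definition tf :: "('p, 'd) struct4 \<Rightarrow> ('p, 'd) struct2" where
  "tf I = (\<lambda>Q ds. case Q of Ct P \<Rightarrow> leq_p Tt (I P ds) | Cf P \<Rightarrow> leq_p Ff (I P ds))"

definition leq_t2 :: "('p, 'd) struct2 \<Rightarrow> ('p, 'd) struct2 \<Rightarrow> bool" where
  "leq_t2 M M' \<longleftrightarrow> (\<forall>Q ds. M Q ds \<longrightarrow> M' Q ds)"

definition glb_t2 :: "('p, 'd) struct2 set \<Rightarrow> ('p, 'd) struct2" where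
  "glb_t2 Ms = (\<lambda>Q ds. \<forall>M\<in>Ms. M Q ds)"

fun ct :: "('p, 'v) fm \<Rightarrow> ('p tfsym, 'v) fm"
and cf :: "('p, 'v) fm \<Rightarrow> ('p tfsym, 'v) fm" where
  "ct (Pred P xs) = Pred (Ct P) xs"
| "cf (Pred P xs) = Pred (Cf P) xs"
| "ct (Eq x y) = Eq x y"
| "cf (Eq x y) = Neg (Eq x y)"
| "ct (Neg f) = cf f"
| "cf (Neg f) = ct f"
| "ct (Conj f g) = Conj (ct f) (ct g)"
| "cf (Conj f g) = Disj (cf f) (cf g)"
| "ct (Disj f g) = Disj (ct f) (ct g)"
| "cf (Disj f g) = Conj (cf f) (cf g)"
| "ct (All x f) = All x (ct f)"
| "cf (All x f) = Ex x (cf f)"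
| "ct (Ex x f) = Ex x (ct f)"
| "cf (Ex x f) = All x (cf f)"

fun sat :: "('q \<Rightarrow> 'd list \<Rightarrow> bool) \<Rightarrow> ('v \<Rightarrow> 'd) \<Rightarrow> ('q, 'v) fm \<Rightarrow> bool" where
  "sat M \<theta> (Pred P xs) = M P (map \<theta> xs)"
| "sat M \<theta> (Eq x y) = (\<theta> x = \<theta> y)"
| "sat M \<theta> (Neg f) = (\<not> sat M \<theta> f)"
| "sat M \<theta> (Conj f g) = (sat M \<theta> f \<and> sat M \<theta> g)"
| "sat M \<theta> (Disj f g) = (sat M \<theta> f \<or> sat M \<theta> g)"
| "sat M \<theta> (All x f) = (\<forall>d. sat M (\<theta>(x := d)) f)"
| "sat M \<theta> (Ex x f) = (\<exists>d. sat M (\<theta>(x := d)) f)"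

text \<open>INF sentence forall xs (psi \<supset> L[xs]); L = P(xs) if pos, else \<not>P(xs).\<close>
record ('p, 'v) inf_sent =
  ivars :: "'v list"
  ibody :: "('p, 'v) fm"
  ipred :: 'p
  ipos  :: bool

definition wf_inf :: "'p set \<Rightarrow> ('p \<Rightarrow> nat) \<Rightarrow> ('p, 'v) inf_sent \<Rightarrow> bool" where
  "wf_inf Sig ar \<phi> \<longleftrightarrow> ipred \<phi> \<in> Sig \<and> length (ivars \<phi>) = ar (ipred \<phi>) \<and>
     distinct (ivars \<phi>) \<and> fv (ibody \<phi>) \<subseteq> set (ivars \<phi>) \<and> wf_fm Sig ar (ibody \<phi>)"

text \<open>The base assignment is irrelevant since fv psi is among the xs.\<close>
definition inf_prop :: "('p, 'v) inf_sent \<Rightarrow> ('p, 'd) struct4 \<Rightarrow> ('p, 'd) struct4" where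
  "inf_prop \<phi> I = (\<lambda>Q ds.
     if Q = ipred \<phi> \<and> length ds = length (ivars \<phi>)
        \<and> leq_p Tt (val4 I (upd (\<lambda>_. undefined) (ivars \<phi>) ds) (ibody \<phi>))
     then lub_p {if ipos \<phi> then Tt else Ff, I Q ds}
     else I Q ds)"

definition Ops :: "('p, 'v) inf_sent set \<Rightarrow> (('p, 'd) struct4 \<Rightarrow> ('p, 'd) struct4) set" where
  "Ops V = inf_prop ` V"

text \<open>A (possibly transfinite) W-refinement sequence from I0 ending in Last, represented by
  its range S (it is strictly <_p-increasing, hence injective, so it is determined up to
  re-indexing by its range): S is well-ordered by <=_p with least element I0 and greatest
  element Last; every successor element arises from its immediate predecessor by an
  operator of W (with strict increase); every limit element is the <=_p-lub of its
  predecessors.\<close>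
definition imm_pred :: "('p, 'd) struct4 set \<Rightarrow> ('p, 'd) struct4 \<Rightarrow> ('p, 'd) struct4 \<Rightarrow> bool" where
  "imm_pred S J' J \<longleftrightarrow> J' \<in> S \<and> less_p_s J' J \<and> \<not> (\<exists>K\<in>S. less_p_s J' K \<and> less_p_s K J)"

definition refinement_seq ::
  "(('p, 'd) struct4 \<Rightarrow> ('p, 'd) struct4) set \<Rightarrow> ('p, 'd) struct4 \<Rightarrow>
   ('p, 'd) struct4 set \<Rightarrow> ('p, 'd) struct4 \<Rightarrow> bool" where
  "refinement_seq W I0 S Last \<longleftrightarrow>
     I0 \<in> S \<and> Last \<in> S \<and>
     (\<forall>J\<in>S. \<forall>K\<in>S. leq_p_s J K \<or> leq_p_s K J) \<and>
     (\<forall>A. A \<subseteq> S \<and> A \<noteq> {} \<longrightarrow> (\<exists>m\<in>A. \<forall>a\<in>A. leq_p_s m a)) \<and>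
     (\<forall>J\<in>S. leq_p_s I0 J \<and> leq_p_s J Last) \<and>
     (\<forall>J\<in>S. J \<noteq> I0 \<longrightarrow>
        ((\<exists>J'. imm_pred S J' J \<and> (\<exists>Op\<in>W. J = Op J')) \<or>
         ((\<nexists>J'. imm_pred S J' J) \<and> J = lub_p_s {K\<in>S. less_p_s K J})))"

definition stabilizing_seq ::
  "(('p, 'd) struct4 \<Rightarrow> ('p, 'd) struct4) set \<Rightarrow> ('p, 'd) struct4 \<Rightarrow>
   ('p, 'd) struct4 set \<Rightarrow> ('p, 'd) struct4 \<Rightarrow> bool" where
  "stabilizing_seq W I0 S Last \<longleftrightarrow> refinement_seq W I0 S Last \<and> (\<forall>Op\<in>W. Op Last = Last)"

definition lim_ref ::
  "(('p, 'd) struct4 \<Rightarrow> ('p, 'd) struct4) set \<Rightarrow> ('p, 'd) struct4 \<Rightarrow> ('p, 'd) struct4" where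
  "lim_ref W I0 = (THE J. \<exists>S. stabilizing_seq W I0 S J)"

text \<open>A rule forall xs (Q(xs) <- chi) is represented as (Q, xs, chi).\<close>
type_synonym ('p, 'v) rule = "'p tfsym \<times> 'v list \<times> ('p tfsym, 'v) fm"

definition Delta :: "('p, 'v) inf_sent set \<Rightarrow> ('p, 'v) rule set" where
  "Delta V = (\<lambda>\<phi>. ((if ipos \<phi> then Ct (ipred \<phi>) else Cf (ipred \<phi>)), ivars \<phi>, ct (ibody \<phi>))) ` V"

definition T_op :: "('p, 'v) rule set \<Rightarrow> ('p, 'd) struct2 \<Rightarrow> ('p, 'd) struct2" where
  "T_op \<Delta> M = (\<lambda>Q ds. M Q ds \<or>
     (\<exists>xs \<chi>. (Q, xs, \<chi>) \<in> \<Delta> \<and> length ds = length xs \<and> sat M (upd (\<lambda>_. undefined) xs ds) \<chi>))"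

definition models_rules :: "('p, 'd) struct2 \<Rightarrow> ('p, 'v) rule set \<Rightarrow> bool" where
  "models_rules M \<Delta> \<longleftrightarrow> T_op \<Delta> M = M"

end

theory Submission
  imports Defs
begin


lemma tv_cases: "x = Tt \<or> x = Ff \<or> x = Uu \<or> x = Ii" by (cases x) auto

lemma glbT: "leq_p Tt (glb_t S) \<longleftrightarrow> (\<forall>x\<in>S. leq_p Tt x)"
  unfolding glb_t_def leq_p_def by (auto; metis tv.exhaust tv.distinct)
lemma glbF: "leq_p Ff (glb_t S) \<longleftrightarrow> (\<exists>x\<in>S. leq_p Ff x)"
  unfolding glb_t_def leq_p_def by (auto; metis tv.exhaust tv.distinct)
lemma lubT: "leq_p Tt (lub_t S) \<longleftrightarrow> (\<exists>x\<in>S. leq_p Tt x)"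
  unfolding lub_t_def leq_p_def by (auto; metis tv.exhaust tv.distinct)
lemma lubF: "leq_p Ff (lub_t S) \<longleftrightarrow> (\<forall>x\<in>S. leq_p Ff x)"
  unfolding lub_t_def leq_p_def by (auto; metis tv.exhaust tv.distinct)
lemma lubpT: "leq_p Tt (lub_p S) \<longleftrightarrow> (\<exists>x\<in>S. leq_p Tt x)"
  unfolding lub_p_def leq_p_def by (auto; metis tv.exhaust tv.distinct)
lemma lubpF: "leq_p Ff (lub_p S) \<longleftrightarrow> (\<exists>x\<in>S. leq_p Ff x)"
  unfolding lub_p_def leq_p_def by (auto; metis tv.exhaust tv.distinct)
lemma invT: "leq_p Tt (inv_tv x) \<longleftrightarrow> leq_p Ff x" by (cases x) (auto simp: leq_p_def)
lemma invF: "leq_p Ff (inv_tv x) \<longleftrightarrow> leq_p Tt x" by (cases x) (auto simp: leq_p_def)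
lemma eqT: "leq_p Tt (if b then Tt else Ff) \<longleftrightarrow> b" by (auto simp: leq_p_def)
lemma eqF: "leq_p Ff (if b then Tt else Ff) \<longleftrightarrow> \<not> b" by (auto simp: leq_p_def)

lemma lub_p_upper: "x \<in> S \<Longrightarrow> leq_p x (lub_p S)"
  unfolding lub_p_def leq_p_def by (auto; metis tv.exhaust tv.distinct)
lemma lub_p_least: "(\<forall>x\<in>S. leq_p x u) \<Longrightarrow> leq_p (lub_p S) u"
  unfolding lub_p_def leq_p_def by (auto; metis tv.exhaust tv.distinct)
lemma leq_p_trans: "leq_p a b \<Longrightarrow> leq_p b c \<Longrightarrow> leq_p a c"
  unfolding leq_p_def by (cases a; cases b; cases c) auto
lemma leq_p_antisym: "leq_p a b \<Longrightarrow> leq_p b a \<Longrightarrow> a = b"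
  unfolding leq_p_def by (cases a; cases b) auto
lemma leq_p_refl: "leq_p a a" unfolding leq_p_def by auto

lemma tv_ext: "leq_p Tt a = leq_p Tt b \<Longrightarrow> leq_p Ff a = leq_p Ff b \<Longrightarrow> a = b"
  by (cases a; cases b) (auto simp: leq_p_def)

lemma tf_val: "sat (tf J) \<theta> (ct f) = leq_p Tt (val4 J \<theta> f) \<and> sat (tf J) \<theta> (cf f) = leq_p Ff (val4 J \<theta> f)"
  by (induction f arbitrary: \<theta>) (auto simp: tf_def glbT glbF lubT lubF invT invF eqT eqF)

lemma sat_mono: "leq_t2 M M' \<Longrightarrow> (sat M \<theta> (ct f) \<longrightarrow> sat M' \<theta> (ct f)) \<and> (sat M \<theta> (cf f) \<longrightarrow> sat M' \<theta> (cf f))"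
  by (induction f arbitrary: \<theta>) (auto simp: leq_t2_def; blast)+



lemma leqs_refl: "leq_p_s J J" by (simp add: leq_p_s_def leq_p_refl)
lemma leqs_trans: "leq_p_s a b \<Longrightarrow> leq_p_s b c \<Longrightarrow> leq_p_s a c"
  unfolding leq_p_s_def by (meson leq_p_trans)
lemma leqs_antisym: "leq_p_s a b \<Longrightarrow> leq_p_s b a \<Longrightarrow> a = b"
  unfolding leq_p_s_def by (intro ext) (meson leq_p_antisym)
lemma lubs_upper: "J \<in> C \<Longrightarrow> leq_p_s J (lub_p_s C)"
  unfolding leq_p_s_def lub_p_s_def by (auto intro: lub_p_upper)
lemma lubs_least: "(\<And>J. J \<in> C \<Longrightarrow> leq_p_s J U) \<Longrightarrow> leq_p_s (lub_p_s C) U"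
  unfolding leq_p_s_def lub_p_s_def by (auto intro!: lub_p_least)

definition stepF :: "(('p, 'd) struct4 \<Rightarrow> ('p, 'd) struct4) set \<Rightarrow> ('p, 'd) struct4 \<Rightarrow> ('p, 'd) struct4" where
  "stepF W J = (if \<exists>Op\<in>W. Op J \<noteq> J then (SOME Op. Op \<in> W \<and> Op J \<noteq> J) J else J)"

lemma stepF_cases: "stepF W J = J \<or> (\<exists>Op\<in>W. stepF W J = Op J \<and> Op J \<noteq> J)"
proof (cases "\<exists>Op\<in>W. Op J \<noteq> J")
  case True
  then have "\<exists>Op. Op \<in> W \<and> Op J \<noteq> J" by blast
  from someI_ex[OF this] True show ?thesis unfolding stepF_def by auto
qed (simp add: stepF_def)

lemma stepF_fix: "stepF W J = J \<Longrightarrow> Op \<in> W \<Longrightarrow> Op J = J"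
proof (rule ccontr)
  assume a: "stepF W J = J" "Op \<in> W" "Op J \<noteq> J"
  then have "\<exists>Op. Op \<in> W \<and> Op J \<noteq> J" by blast
  then have ex: "\<exists>Op\<in>W. Op J \<noteq> J" by blast
  from someI_ex[OF this[unfolded Bex_def]] have "(SOME Op. Op \<in> W \<and> Op J \<noteq> J) J \<noteq> J" by blast
  moreover have "stepF W J = (SOME Op. Op \<in> W \<and> Op J \<noteq> J) J" using ex by (simp add: stepF_def)
  ultimately show False using a(1) by simp
qed

inductive tower :: "(('p, 'd) struct4 \<Rightarrow> ('p, 'd) struct4) set \<Rightarrow> ('p, 'd) struct4 \<Rightarrow> ('p, 'd) struct4 \<Rightarrow> bool"
  for W I0 where
  base: "tower W I0 I0"
| step: "tower W I0 J \<Longrightarrow> tower W I0 (stepF W J)"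
| lim: "\<forall>x\<in>C. tower W I0 x \<Longrightarrow> C \<noteq> {} \<Longrightarrow> tower W I0 (lub_p_s C)"

context
  fixes W :: "(('p, 'd) struct4 \<Rightarrow> ('p, 'd) struct4) set" and I0 :: "('p, 'd) struct4"
  assumes infl: "\<And>Op J. Op \<in> W \<Longrightarrow> leq_p_s J (Op J)"
begin

abbreviation "T \<equiv> tower W I0"
abbreviation "F \<equiv> stepF W"

lemma F_infl: "leq_p_s J (F J)"
  using stepF_cases[of W J] infl by (metis leqs_refl)

lemma T_ge: "T x \<Longrightarrow> leq_p_s I0 x"
proof (induction rule: tower.induct)
  case base then show ?case by (rule leqs_refl)
next
  case (step J) then show ?case using F_infl leqs_trans by blast
next
  case (lim C)
  then obtain c where "c \<in> C" by blast
  with lim show ?case using lubs_upper leqs_trans by blast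
qed

definition ext_pt where "ext_pt c \<longleftrightarrow> T c \<and> (\<forall>x. T x \<longrightarrow> less_p_s x c \<longrightarrow> leq_p_s (F x) c)"

lemma L1: assumes "ext_pt c" shows "T x \<Longrightarrow> leq_p_s x c \<or> leq_p_s (F c) x"
proof (induction rule: tower.induct)
  case base then show ?case using assms T_ge ext_pt_def by blast
next
  case (step J)
  from step.IH show ?case
  proof
    assume "leq_p_s J c"
    then show ?thesis
    proof (cases "J = c")
      case True then show ?thesis using leqs_refl by auto
    next
      case False then show ?thesis using assms step \<open>leq_p_s J c\<close> unfolding ext_pt_def less_p_s_def by blast
    qed
  next
    assume "leq_p_s (F c) J" then show ?thesis using F_infl leqs_trans by blast
  qed
next
  case (lim C)
  show ?case
  proof (cases "\<forall>x\<in>C. leq_p_s x c")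
    case True then show ?thesis using lubs_least by blast
  next
    case False
    then obtain x where "x \<in> C" "\<not> leq_p_s x c" by blast
    with lim have "leq_p_s (F c) x" by blast
    then show ?thesis using lubs_upper[OF \<open>x \<in> C\<close>] leqs_trans by blast
  qed
qed

lemma L2: "T c \<Longrightarrow> ext_pt c"
proof (induction rule: tower.induct)
  case base then show ?case unfolding ext_pt_def less_p_s_def
    using T_ge leqs_antisym tower.base by blast
next
  case (step c)
  have "leq_p_s (F x) (F c)" if "T x" "less_p_s x (F c)" for x
  proof -
    from L1[OF step.IH that(1)] have "leq_p_s x c \<or> leq_p_s (F c) x" .
    then have "leq_p_s x c" using that(2) leqs_antisym unfolding less_p_s_def by blast
    show ?thesis
    proof (cases "x = c")
      case True then show ?thesis by (simp add: leqs_refl)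
    next
      case False
      with \<open>leq_p_s x c\<close> step.IH that(1) have "leq_p_s (F x) c" unfolding ext_pt_def less_p_s_def by blast
      then show ?thesis using F_infl leqs_trans by blast
    qed
  qed
  then show ?case unfolding ext_pt_def using step tower.step by blast
next
  case (lim C)
  have "leq_p_s (F x) (lub_p_s C)" if "T x" "less_p_s x (lub_p_s C)" for x
  proof -
    have "\<exists>c\<in>C. leq_p_s x c"
    proof (rule ccontr)
      assume "\<not> ?thesis"
      have "leq_p_s c x" if "c \<in> C" for c
      proof -
        have "ext_pt c" using lim.IH that by blast
        from L1[OF this \<open>T x\<close>] \<open>\<not> (\<exists>c\<in>C. leq_p_s x c)\<close> that have "leq_p_s (F c) x" by blast
        then show ?thesis using F_infl leqs_trans by blast
      qed
      then have "leq_p_s (lub_p_s C) x" by (rule lubs_least)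
      then show False using that(2) leqs_antisym unfolding less_p_s_def by blast
    qed
    then obtain c where c: "c \<in> C" "leq_p_s x c" by blast
    show ?thesis
    proof (cases "x = c")
      case False
      with c lim.IH that(1) have "leq_p_s (F x) c" unfolding ext_pt_def less_p_s_def by blast
      then show ?thesis using lubs_upper[OF c(1)] leqs_trans by blast
    next
      case True
      have "\<exists>c'\<in>C. \<not> leq_p_s c' c"
      proof (rule ccontr)
        assume "\<not> ?thesis"
        then have "leq_p_s (lub_p_s C) c" using lubs_least by blast
        then show False using that(2) True leqs_antisym unfolding less_p_s_def by blast
      qed
      then obtain c' where "c' \<in> C" "\<not> leq_p_s c' c" by blast
      have "ext_pt c" using lim.IH c(1) by blast
      from L1[OF this] lim.IH \<open>c' \<in> C\<close> \<open>\<not> leq_p_s c' c\<close> have "leq_p_s (F c) c'" by blast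
      then show ?thesis using True lubs_upper[OF \<open>c' \<in> C\<close>] leqs_trans by blast
    qed
  qed
  then show ?case unfolding ext_pt_def using lim tower.lim by blast
qed

lemma comp: "T c \<Longrightarrow> T x \<Longrightarrow> leq_p_s x c \<or> leq_p_s (F c) x"
  using L1 L2 by blast

lemma chain: "T c \<Longrightarrow> T x \<Longrightarrow> leq_p_s x c \<or> leq_p_s c x"
  using comp F_infl leqs_trans by blast

lemma fixtop: assumes "T b" "F b = b" shows "T x \<Longrightarrow> leq_p_s x b"
proof (induction rule: tower.induct)
  case base then show ?case using T_ge assms by blast
next
  case (step J)
  from comp[OF step.hyps assms(1)] show ?case
  proof
    assume "leq_p_s b J"
    then have "J = b" using step leqs_antisym by blast
    then show ?thesis using assms leqs_refl by simp
  qed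
next
  case (lim C) then show ?case using lubs_least by blast
qed

lemma wo: assumes "A \<subseteq> Collect T" "A \<noteq> {}" shows "\<exists>m\<in>A. \<forall>a\<in>A. leq_p_s m a"
proof -
  define B where "B = {K. T K \<and> (\<forall>a\<in>A. leq_p_s K a)}"
  have "I0 \<in> B" using assms T_ge unfolding B_def by (auto intro: tower.base)
  define b where "b = lub_p_s B"
  have Tb: "T b" unfolding b_def B_def using \<open>I0 \<in> B\<close> by (intro tower.lim) (auto simp: B_def)
  have bA: "\<forall>a\<in>A. leq_p_s b a" unfolding b_def B_def by (auto intro: lubs_least)
  show ?thesis
  proof (cases "b \<in> A")
    case True then show ?thesis using bA by blast
  next
    case False
    have "leq_p_s (F b) a" if "a \<in> A" for a
    proof -
      have "T a" using assms that by blast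
      from comp[OF Tb this] show ?thesis
        using False bA that leqs_antisym by blast
    qed
    then have "F b \<in> B" unfolding B_def using Tb tower.step by blast
    then have "F b = b" using lubs_upper F_infl leqs_antisym unfolding b_def by metis
    obtain a where "a \<in> A" using assms by blast
    then have "leq_p_s a b" using fixtop[OF Tb \<open>F b = b\<close>] assms by blast
    then show ?thesis using bA \<open>a \<in> A\<close> False leqs_antisym by blast
  qed
qed

definition "Lst = lub_p_s (Collect T)"

lemma Lst_T: "T Lst" unfolding Lst_def by (rule tower.lim) (auto intro: tower.base)
lemma Lst_fix: "F Lst = Lst"
  using Lst_T tower.step lubs_upper F_infl leqs_antisym unfolding Lst_def by (metis mem_Collect_eq)
lemma le_Lst: "T x \<Longrightarrow> leq_p_s x Lst" unfolding Lst_def by (simp add: lubs_upper)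

lemma exists_stab: "stabilizing_seq W I0 (Collect T) Lst"
proof -
  let ?S = "Collect T"
  have succ_or_lim: "(\<exists>J'. imm_pred ?S J' J \<and> (\<exists>Op\<in>W. J = Op J')) \<or>
         ((\<nexists>J'. imm_pred ?S J' J) \<and> J = lub_p_s {K\<in>?S. less_p_s K J})"
    if TJ: "T J" and ne: "J \<noteq> I0" for J
  proof (cases "\<exists>J'. imm_pred ?S J' J")
    case True
    then obtain J' where ip: "imm_pred ?S J' J" by blast
    then have TJ': "T J'" and lt: "less_p_s J' J" unfolding imm_pred_def by auto
    have nofix: "F J' \<noteq> J'"
    proof
      assume "F J' = J'"
      then have "leq_p_s J J'" using fixtop TJ' TJ by blast
      then show False using lt leqs_antisym unfolding less_p_s_def by blast
    qed
    have "leq_p_s (F J') J" using comp[OF TJ' TJ] lt leqs_antisym unfolding less_p_s_def by blast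
    moreover have "less_p_s J' (F J')" using nofix F_infl unfolding less_p_s_def by auto
    moreover have "T (F J')" using TJ' tower.step by blast
    ultimately have "F J' = J" using ip unfolding imm_pred_def less_p_s_def by auto
    then show ?thesis using stepF_cases[of W J'] nofix ip by metis
  next
    case False
    let ?P = "{K\<in>?S. less_p_s K J}"
    have "I0 \<in> ?P" using ne T_ge TJ tower.base unfolding less_p_s_def by auto
    then have TP: "T (lub_p_s ?P)" by (intro tower.lim) auto
    have le: "leq_p_s (lub_p_s ?P) J" by (rule lubs_least) (auto simp: less_p_s_def)
    have "lub_p_s ?P = J"
    proof (rule ccontr)
      assume neq: "lub_p_s ?P \<noteq> J"
      have nb: "\<not> less_p_s (lub_p_s ?P) K" if "K \<in> ?S" "less_p_s K J" for K
      proof -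
        have "K \<in> ?P" using that by blast
        then have "leq_p_s K (lub_p_s ?P)" by (rule lubs_upper)
        then show ?thesis using leqs_antisym unfolding less_p_s_def by blast
      qed
      have "imm_pred ?S (lub_p_s ?P) J"
        unfolding imm_pred_def using TP le neq nb
        unfolding less_p_s_def by blast
      then show False using False by blast
    qed
    then show ?thesis using False by auto
  qed
  show ?thesis
    unfolding stabilizing_seq_def refinement_seq_def
  proof (intro conjI ballI allI impI)
    show "I0 \<in> ?S" by (simp add: tower.base)
    show "Lst \<in> ?S" using Lst_T by simp
    show "leq_p_s J K \<or> leq_p_s K J" if "J \<in> ?S" "K \<in> ?S" for J K
      using chain that by blast
    show "\<exists>m\<in>A. \<forall>a\<in>A. leq_p_s m a" if "A \<subseteq> ?S \<and> A \<noteq> {}" for A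
      using wo that by blast
    show "leq_p_s I0 J" if "J \<in> ?S" for J using T_ge that by simp
    show "leq_p_s J Lst" if "J \<in> ?S" for J using le_Lst that by simp
    show "(\<exists>J'. imm_pred ?S J' J \<and> (\<exists>Op\<in>W. J = Op J')) \<or>
         ((\<nexists>J'. imm_pred ?S J' J) \<and> J = lub_p_s {K\<in>?S. less_p_s K J})"
      if "J \<in> ?S" "J \<noteq> I0" for J using succ_or_lim that by simp
    show "Op Lst = Lst" if "Op \<in> W" for Op using stepF_fix Lst_fix that by blast
  qed
qed

end



lemma rs_parts:
  assumes "refinement_seq W I0 S L"
  shows "I0 \<in> S" "L \<in> S" "\<And>A. A \<subseteq> S \<Longrightarrow> A \<noteq> {} \<Longrightarrow> \<exists>m\<in>A. \<forall>a\<in>A. leq_p_s m a"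
    "\<And>J. J \<in> S \<Longrightarrow> leq_p_s I0 J" "\<And>J. J \<in> S \<Longrightarrow> leq_p_s J L"
    "\<And>J. J \<in> S \<Longrightarrow> J \<noteq> I0 \<Longrightarrow> (\<exists>J'. imm_pred S J' J \<and> (\<exists>Op\<in>W. J = Op J')) \<or>
        ((\<nexists>J'. imm_pred S J' J) \<and> J = lub_p_s {K\<in>S. less_p_s K J})"
  using assms unfolding refinement_seq_def by simp_all

lemma seq_induct:
  assumes rs: "refinement_seq W I0 S L"
    and b: "P I0"
    and s: "\<And>J' Op. J' \<in> S \<Longrightarrow> Op \<in> W \<Longrightarrow> P J' \<Longrightarrow> P (Op J')"
    and l: "\<And>C. C \<subseteq> S \<Longrightarrow> \<forall>K\<in>C. P K \<Longrightarrow> P (lub_p_s C)"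
    and J: "J \<in> S"
  shows "P J"
proof (rule ccontr)
  assume nP: "\<not> P J"
  let ?A = "{J\<in>S. \<not> P J}"
  have "?A \<subseteq> S" "?A \<noteq> {}" using J nP by blast+
  then have "\<exists>m\<in>?A. \<forall>a\<in>?A. leq_p_s m a" by (rule rs_parts(3)[OF rs])
  then obtain m where m: "m \<in> S" "\<not> P m" and mmin: "\<And>a. a \<in> S \<Longrightarrow> \<not> P a \<Longrightarrow> leq_p_s m a" by blast
  have below: "P K" if "K \<in> S" "less_p_s K m" for K
    using mmin[OF that(1)] that(2) leqs_antisym unfolding less_p_s_def by blast
  have "m \<noteq> I0" using b m by blast
  with m(1) have "(\<exists>J'. imm_pred S J' m \<and> (\<exists>Op\<in>W. m = Op J')) \<or>
         ((\<nexists>J'. imm_pred S J' m) \<and> m = lub_p_s {K\<in>S. less_p_s K m})"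
    by (rule rs_parts(6)[OF rs])
  then show False
  proof
    assume "\<exists>J'. imm_pred S J' m \<and> (\<exists>Op\<in>W. m = Op J')"
    then obtain J' Op where "imm_pred S J' m" "Op \<in> W" "m = Op J'" by blast
    then show False using below s m unfolding imm_pred_def by blast
  next
    assume "(\<nexists>J'. imm_pred S J' m) \<and> m = lub_p_s {K\<in>S. less_p_s K m}"
    then have "m = lub_p_s {K\<in>S. less_p_s K m}" by blast
    moreover have "P (lub_p_s {K\<in>S. less_p_s K m})" by (rule l) (auto intro: below)
    ultimately show False using m by simp
  qed
qed



lemma lp_simps[simp]: "leq_p Ff Tt = False" "leq_p Tt Ff = False" "leq_p Tt Tt" "leq_p Ff Ff"
  "leq_p Tt Uu = False" "leq_p Ff Uu = False"
  by (auto simp: leq_p_def)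

lemma inf_prop_infl: "leq_p_s J (inf_prop \<phi> J)"
  unfolding leq_p_s_def inf_prop_def by (auto intro: lub_p_upper leq_p_refl)

lemma wf4_inf_prop: "wf_inf Sig ar \<phi> \<Longrightarrow> wf4 Sig ar J \<Longrightarrow> wf4 Sig ar (inf_prop \<phi> J)"
  unfolding wf4_def inf_prop_def wf_inf_def by auto

lemma wf4_lub: "\<forall>K\<in>C. wf4 Sig ar K \<Longrightarrow> wf4 Sig ar (lub_p_s C)"
proof -
  assume a: "\<forall>K\<in>C. wf4 Sig ar K"
  have "lub_p {J P ds |J. J \<in> C} = Uu" if "\<not> (P \<in> Sig \<and> length ds = ar P)" for P ds
  proof -
    have "{J P ds |J. J \<in> C} \<subseteq> {Uu}" using a that unfolding wf4_def by auto
    then show ?thesis unfolding lub_p_def by auto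
  qed
  then show ?thesis unfolding wf4_def lub_p_s_def by auto
qed

lemma tf_Ct[simp]: "tf J (Ct P) ds = leq_p Tt (J P ds)" by (simp add: tf_def)
lemma tf_Cf[simp]: "tf J (Cf P) ds = leq_p Ff (J P ds)" by (simp add: tf_def)

lemma tf_mono: "leq_p_s I J \<Longrightarrow> leq_t2 (tf I) (tf J)"
  unfolding leq_t2_def leq_p_s_def
proof (intro allI impI)
  fix Q ds assume a: "\<forall>P ds. leq_p (I P ds) (J P ds)" "tf I Q ds"
  then show "tf J Q ds" by (cases Q) (auto intro: leq_p_trans)
qed

lemma tf_lub: "tf (lub_p_s C) Q ds \<longleftrightarrow> (\<exists>K\<in>C. tf K Q ds)"
  by (cases Q) (auto simp: lub_p_s_def lubpT lubpF)

lemma tf_inj: "tf I = tf J \<Longrightarrow> I = J"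
proof (intro ext)
  fix P ds assume "tf I = tf J"
  then have "tf I (Ct P) ds = tf J (Ct P) ds" "tf I (Cf P) ds = tf J (Cf P) ds" by simp_all
  then show "I P ds = J P ds" by (intro tv_ext) simp_all
qed

definition sym_of :: "('p, 'v) inf_sent \<Rightarrow> 'p tfsym" where
  "sym_of \<phi> = (if ipos \<phi> then Ct (ipred \<phi>) else Cf (ipred \<phi>))"

lemma tf_inf_prop: "tf (inf_prop \<phi> J) Q ds \<Longrightarrow> tf J Q ds \<or>
   (Q = sym_of \<phi> \<and> length ds = length (ivars \<phi>) \<and>
    sat (tf J) (upd (\<lambda>_. undefined) (ivars \<phi>) ds) (ct (ibody \<phi>)))"
  by (cases Q) (auto simp: inf_prop_def sym_of_def tf_val lubpT lubpF split: if_splits)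

lemma fix_prop: "inf_prop \<phi> J = J \<Longrightarrow> length ds = length (ivars \<phi>) \<Longrightarrow>
   sat (tf J) (upd (\<lambda>_. undefined) (ivars \<phi>) ds) (ct (ibody \<phi>)) \<Longrightarrow> tf J (sym_of \<phi>) ds"
proof -
  assume a: "inf_prop \<phi> J = J" "length ds = length (ivars \<phi>)"
    "sat (tf J) (upd (\<lambda>_. undefined) (ivars \<phi>) ds) (ct (ibody \<phi>))"
  let ?P = "ipred \<phi>"
  have "inf_prop \<phi> J ?P ds = J ?P ds" using a(1) by simp
  moreover have "inf_prop \<phi> J ?P ds = lub_p {if ipos \<phi> then Tt else Ff, J ?P ds}"
    using a(2,3) tf_val unfolding inf_prop_def by auto
  ultimately have e: "lub_p {if ipos \<phi> then Tt else Ff, J ?P ds} = J ?P ds" by simp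
  have "leq_p (if ipos \<phi> then Tt else Ff) (J ?P ds)" by (subst e[symmetric]) (rule lub_p_upper, simp)
  then show ?thesis unfolding sym_of_def by (auto split: if_splits)
qed

lemma T_op_rule: "models_rules M (Delta V) \<Longrightarrow> \<phi> \<in> V \<Longrightarrow> length ds = length (ivars \<phi>) \<Longrightarrow>
   sat M (upd (\<lambda>_. undefined) (ivars \<phi>) ds) (ct (ibody \<phi>)) \<Longrightarrow> M (sym_of \<phi>) ds"
proof -
  assume a: "models_rules M (Delta V)" "\<phi> \<in> V" "length ds = length (ivars \<phi>)"
    "sat M (upd (\<lambda>_. undefined) (ivars \<phi>) ds) (ct (ibody \<phi>))"
  have "(sym_of \<phi>, ivars \<phi>, ct (ibody \<phi>)) \<in> Delta V"
    using a(2) unfolding Delta_def sym_of_def by auto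
  then have "T_op (Delta V) M (sym_of \<phi>) ds" using a(3,4) unfolding T_op_def by blast
  then show ?thesis using a(1) unfolding models_rules_def by simp
qed

lemma stab_tf:
  assumes st: "stabilizing_seq (Ops V) I S L"
    and wfV: "\<forall>\<phi>\<in>V. wf_inf Sig ar \<phi>" and wfI: "wf4 Sig ar I"
  shows "tf L = glb_t2 {M. wf2 Sig ar M \<and> models_rules M (Delta V) \<and> leq_t2 (tf I) M}"
proof -
  let ?Mst = "{M. wf2 Sig ar M \<and> models_rules M (Delta V) \<and> leq_t2 (tf I) M}"
  have rs: "refinement_seq (Ops V) I S L" and fx: "\<And>Op. Op \<in> Ops V \<Longrightarrow> Op L = L"
    using st unfolding stabilizing_seq_def by auto
  have LS: "L \<in> S" using rs_parts(2)[OF rs] .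
  have wfS: "wf4 Sig ar J" if "J \<in> S" for J
    using rs wfI _ _ that
  proof (rule seq_induct)
    show "wf4 Sig ar (Op J')" if "Op \<in> Ops V" "wf4 Sig ar J'" for J' Op
      using that wfV wf4_inf_prop unfolding Ops_def by blast
    show "wf4 Sig ar (lub_p_s C)" if "\<forall>K\<in>C. wf4 Sig ar K" for C
      using that by (rule wf4_lub)
  qed
  have wfL: "wf4 Sig ar L" using wfS LS .
  have wf2L: "wf2 Sig ar (tf L)"
    unfolding wf2_def
  proof (intro allI impI)
    fix Q ds assume a: "tf L Q ds"
    show "base_sym Q \<in> Sig \<and> length ds = ar (base_sym Q)"
    proof (rule ccontr)
      assume "\<not> ?thesis"
      then have "L (base_sym Q) ds = Uu" using wfL unfolding wf4_def by blast
      then show False using a by (cases Q) auto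
    qed
  qed
  have modL: "models_rules (tf L) (Delta V)"
    unfolding models_rules_def
  proof (intro ext iffI)
    fix Q ds assume "T_op (Delta V) (tf L) Q ds"
    then consider "tf L Q ds" | xs \<chi> where "(Q, xs, \<chi>) \<in> Delta V" "length ds = length xs"
       "sat (tf L) (upd (\<lambda>_. undefined) xs ds) \<chi>" unfolding T_op_def by blast
    then show "tf L Q ds"
    proof cases
      case 2
      then obtain \<phi> where "\<phi> \<in> V" "Q = sym_of \<phi>" "xs = ivars \<phi>" "\<chi> = ct (ibody \<phi>)"
        unfolding Delta_def sym_of_def by auto
      moreover have "inf_prop \<phi> L = L" using fx \<open>\<phi> \<in> V\<close> unfolding Ops_def by blast
      ultimately show ?thesis using fix_prop 2 by metis
    qed
  next
    fix Q ds assume "tf L Q ds" then show "T_op (Delta V) (tf L) Q ds" unfolding T_op_def by blast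
  qed
  have geI: "leq_t2 (tf I) (tf L)" using rs_parts(4)[OF rs LS] by (rule tf_mono)
  have Lin: "tf L \<in> ?Mst" using wf2L modL geI by blast
  have below: "leq_t2 (tf J) M" if "M \<in> ?Mst" "J \<in> S" for M J
    using rs _ _ _ that(2)
  proof (rule seq_induct)
    show "leq_t2 (tf I) M" using that(1) by blast
    show "leq_t2 (tf (Op J')) M" if "Op \<in> Ops V" "leq_t2 (tf J') M" for J' Op
    proof -
      obtain \<phi> where \<phi>: "\<phi> \<in> V" "Op = inf_prop \<phi>" using \<open>Op \<in> Ops V\<close> unfolding Ops_def by blast
      have modM: "models_rules M (Delta V)" using \<open>M \<in> ?Mst\<close> by blast
      show ?thesis unfolding leq_t2_def
      proof (intro allI impI)
        fix Q ds assume "tf (Op J') Q ds"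
        then have "tf J' Q ds \<or> (Q = sym_of \<phi> \<and> length ds = length (ivars \<phi>) \<and>
           sat (tf J') (upd (\<lambda>_. undefined) (ivars \<phi>) ds) (ct (ibody \<phi>)))"
          using tf_inf_prop \<phi>(2) by blast
        then show "M Q ds"
        proof
          assume "tf J' Q ds" then show ?thesis using that(2) unfolding leq_t2_def by blast
        next
          assume h: "Q = sym_of \<phi> \<and> length ds = length (ivars \<phi>) \<and>
           sat (tf J') (upd (\<lambda>_. undefined) (ivars \<phi>) ds) (ct (ibody \<phi>))"
          then have "sat M (upd (\<lambda>_. undefined) (ivars \<phi>) ds) (ct (ibody \<phi>))"
            using sat_mono[OF that(2)] by blast
          then show ?thesis using T_op_rule[OF modM \<phi>(1)] h by blast
        qed
      qed
    qed
    show "leq_t2 (tf (lub_p_s C)) M" if "\<forall>K\<in>C. leq_t2 (tf K) M" for C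
      using that unfolding leq_t2_def tf_lub by blast
  qed
  show ?thesis
  proof (intro ext iffI)
    fix Q ds assume "tf L Q ds"
    then show "glb_t2 ?Mst Q ds" unfolding glb_t2_def using below LS unfolding leq_t2_def by blast
  next
    fix Q ds assume "glb_t2 ?Mst Q ds"
    then show "tf L Q ds" using Lin unfolding glb_t2_def by blast
  qed
qed

theorem proposition4p6:
  fixes Sig :: "'p set" and ar :: "'p \<Rightarrow> nat"
    and V :: "('p, 'v) inf_sent set" and I :: "('p, 'd) struct4"
  assumes "finite Sig"
    and "finite V"
    and "\<forall>\<phi>\<in>V. wf_inf Sig ar \<phi>"
    and "wf4 Sig ar I"
  shows "tf (lim_ref (Ops V) I) =
         glb_t2 {M. wf2 Sig ar M \<and> models_rules M (Delta V) \<and> leq_t2 (tf I) M}"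
proof -
  have infl: "\<And>Op J. Op \<in> Ops V \<Longrightarrow> leq_p_s J (Op J)"
    unfolding Ops_def using inf_prop_infl by blast
  have ex: "\<exists>S. stabilizing_seq (Ops V) I S (Lst (Ops V) I)"
  proof
    show "stabilizing_seq (Ops V) I (Collect (tower (Ops V) I)) (Lst (Ops V) I)"
      by (rule exists_stab) (rule infl)
  qed
  have uniq: "\<exists>!J. \<exists>S. stabilizing_seq (Ops V) I S J"
  proof (rule ex1I)
    show "\<exists>S. stabilizing_seq (Ops V) I S (Lst (Ops V) I)" by (rule ex)
    fix J assume "\<exists>S. stabilizing_seq (Ops V) I S J"
    then obtain S where s1: "stabilizing_seq (Ops V) I S J" by blast
    obtain S0 where s2: "stabilizing_seq (Ops V) I S0 (Lst (Ops V) I)" using ex by blast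
    have "tf J = tf (Lst (Ops V) I)"
      using stab_tf[OF s1 assms(3,4)] stab_tf[OF s2 assms(3,4)] by simp
    then show "J = Lst (Ops V) I" by (rule tf_inj)
  qed
  from theI'[OF uniq] obtain S where "stabilizing_seq (Ops V) I S (lim_ref (Ops V) I)"
    unfolding lim_ref_def by blast
  then show ?thesis by (rule stab_tf[OF _ assms(3,4)])
qed


end
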